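(* Let $A$ and $B$ be automata such that $A$ is a forest and $A\le_{*T}B$. Then $A\le_B B$.
   Context: An automaton $A$ consists of a set $\mathrm{states}(A)$ of states, a nonempty set $\mathrm{start}(A)\subseteq\mathrm{states}(A)$ of start states, a set $\mathrm{acts}(A)$ of actions containing a distinguished internal action $\tau$, and a set $\mathrm{steps}(A)\subseteq\mathrm{states}(A)\times\mathrm{acts}(A)\times\mathrm{states}(A)$ of steps; write $s\xrightarrow{a}_A t$ for $(s,a,t)\in\mathrm{steps}(A)$. An execution fragment of $A$ is a finite or infinite alternating sequence $s_0a_1s_1a_2s_2\cdots$ of states and actions, beginning with a state and, if finite, ending with a state, such that $s_{i-1}\xrightarrow{a_i}_A s_i$ for all $i>0$. An execution is an execution fragment whose first state is a start state. The trace of an execution fragment is the subsequence of its non-$\tau$ actions; a trace of $A$ is the trace of some execution of $A$, and $\mathrm{traces}^*(A)$ is the set of finite traces of $A$. $A\le_{*T}B$ means $\mathrm{traces}^*(A)\subseteq\mathrm{traces}^*(B)$. $A$ is a forest if for each state $s$ of $A$ there is exactly one (finite) execution of $A$ whose last state is $s$. For a relation $R$ write $R[s]=\{u\mid (s,u)\in R\}$. A normed backward simulation from $A$ to $B$ is a pair $(b,n)$ where $b\subseteq\mathrm{states}(A)\times\mathrm{states}(B)$ is total (every $s\in\mathrm{states}(A)$ has $b[s]\neq\emptyset$) and $n:(\mathrm{steps}(A)\cup\mathrm{start}(A))\times\mathrm{states}(B)\to S$ for some set $S$ with a well-founded strict order $<$, such that: (1) if $s\in\mathrm{start}(A)$ and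 $u\in b[s]$ then (a) $u\in\mathrm{start}(B)$, or (b) there is $v\in b[s]$ with $v\xrightarrow{\tau}_B u$ and $n(s,v)<n(s,u)$; (2) if $t\xrightarrow{a}_A s$ and $u\in b[s]$ then (a) $u\in b[t]$ and $a=\tau$, or (b) there is $v\in b[t]$ with $v\xrightarrow{a}_B u$, or (c) there is $v\in b[s]$ with $v\xrightarrow{\tau}_B u$ and $n(t\xrightarrow{a}s,v)<n(t\xrightarrow{a}s,u)$. Write $A\le_B B$ if one exists. *)

theory Defs
  imports Main
begin

text \<open>Automata. The internal action tau is a parameter shared by all automata under
comparison (same action type).\<close>

record ('s, 'a) automaton =
  states :: "'s set"
  start  :: "'s set"
  acts   :: "'a set"
  steps  :: "('s \<times> 'a \<times> 's) set"

definition is_automaton :: "'a \<Rightarrow> ('s, 'a) automaton \<Rightarrow> bool" where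
  "is_automaton tau A \<longleftrightarrow>
     start A \<noteq> {} \<and> start A \<subseteq> states A \<and> tau \<in> acts A \<and>
     steps A \<subseteq> states A \<times> acts A \<times> states A"

definition fin_exec_frag :: "('s, 'a) automaton \<Rightarrow> 's \<Rightarrow> ('a \<times> 's) list \<Rightarrow> bool" where
  "fin_exec_frag A s0 xs \<longleftrightarrow> s0 \<in> states A \<and>
     (\<forall>i < length xs. ((if i = 0 then s0 else snd (xs ! (i - 1))), fst (xs ! i), snd (xs ! i)) \<in> steps A)"

definition inf_exec_frag :: "('s, 'a) automaton \<Rightarrow> 's \<Rightarrow> (nat \<Rightarrow> 'a \<times> 's) \<Rightarrow> bool" where
  "inf_exec_frag A s0 f \<longleftrightarrow> s0 \<in> states A \<and>
     (\<forall>i. ((if i = 0 then s0 else snd (f (i - 1))), fst (f i), snd (f i)) \<in> steps A)"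

definition fin_exec :: "('s, 'a) automaton \<Rightarrow> 's \<Rightarrow> ('a \<times> 's) list \<Rightarrow> bool" where
  "fin_exec A s0 xs \<longleftrightarrow> s0 \<in> start A \<and> fin_exec_frag A s0 xs"

definition inf_exec :: "('s, 'a) automaton \<Rightarrow> 's \<Rightarrow> (nat \<Rightarrow> 'a \<times> 's) \<Rightarrow> bool" where
  "inf_exec A s0 f \<longleftrightarrow> s0 \<in> start A \<and> inf_exec_frag A s0 f"

definition last_state :: "'s \<Rightarrow> ('a \<times> 's) list \<Rightarrow> 's" where
  "last_state s0 xs = (if xs = [] then s0 else snd (last xs))"

definition fin_trace :: "'a \<Rightarrow> ('a \<times> 's) list \<Rightarrow> 'a list" where
  "fin_trace tau xs = filter (\<lambda>a. a \<noteq> tau) (map fst xs)"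

definition inf_has_fin_trace :: "'a \<Rightarrow> (nat \<Rightarrow> 'a \<times> 's) \<Rightarrow> 'a list \<Rightarrow> bool" where
  "inf_has_fin_trace tau f tr \<longleftrightarrow> finite {i. fst (f i) \<noteq> tau} \<and>
     tr = map (\<lambda>i. fst (f i)) (sorted_list_of_set {i. fst (f i) \<noteq> tau})"

definition fin_traces :: "'a \<Rightarrow> ('s, 'a) automaton \<Rightarrow> 'a list set" where
  "fin_traces tau A =
     {tr. (\<exists>s0 xs. fin_exec A s0 xs \<and> tr = fin_trace tau xs) \<or>
          (\<exists>s0 f. inf_exec A s0 f \<and> inf_has_fin_trace tau f tr)}"

definition fin_trace_incl :: "'a \<Rightarrow> ('s, 'a) automaton \<Rightarrow> ('t, 'a) automaton \<Rightarrow> bool" where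
  "fin_trace_incl tau A B \<longleftrightarrow> fin_traces tau A \<subseteq> fin_traces tau B"

definition is_forest :: "('s, 'a) automaton \<Rightarrow> bool" where
  "is_forest A \<longleftrightarrow> (\<forall>s \<in> states A. \<exists>!e. fin_exec A (fst e) (snd e) \<and> last_state (fst e) (snd e) = s)"

text \<open>The norm is indexed by start states (Inl s) and
steps (Inr (t,a,s)) of A together with a state of B. Its codomain is represented by
the type 'm with a well-founded strict order R (pairs (x,y) meaning x < y).\<close>

definition normed_bsim ::
  "'a \<Rightarrow> ('s, 'a) automaton \<Rightarrow> ('t, 'a) automaton \<Rightarrow> ('s \<times> 't) set
     \<Rightarrow> (('s + ('s \<times> 'a \<times> 's)) \<times> 't \<Rightarrow> 'm) \<Rightarrow> ('m \<times> 'm) set \<Rightarrow> bool" where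
  "normed_bsim tau A B b n R \<longleftrightarrow>
     wf R \<and> trans R \<and>
     b \<subseteq> states A \<times> states B \<and>
     (\<forall>s \<in> states A. b `` {s} \<noteq> {}) \<and>
     (\<forall>s \<in> start A. \<forall>u \<in> b `` {s}.
        u \<in> start B \<or>
        (\<exists>v \<in> b `` {s}. (v, tau, u) \<in> steps B \<and> (n (Inl s, v), n (Inl s, u)) \<in> R)) \<and>
     (\<forall>t a s. (t, a, s) \<in> steps A \<longrightarrow> (\<forall>u \<in> b `` {s}.
        (u \<in> b `` {t} \<and> a = tau) \<or>
        (\<exists>v \<in> b `` {t}. (v, a, u) \<in> steps B) \<or>
        (\<exists>v \<in> b `` {s}. (v, tau, u) \<in> steps B \<and>
            (n (Inr (t, a, s), v), n (Inr (t, a, s), u)) \<in> R)))"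

text \<open>The norm codomain is taken to be the type of the norm's domain; this is
no loss of generality since any norm into a well-founded order can be pulled back
along itself (inverse image of a well-founded order is well-founded).\<close>

definition bsim_le :: "'a \<Rightarrow> ('s, 'a) automaton \<Rightarrow> ('t, 'a) automaton \<Rightarrow> bool" where
  "bsim_le tau A B \<longleftrightarrow>
     (\<exists>b (n :: ('s + ('s \<times> 'a \<times> 's)) \<times> 't \<Rightarrow> ('s + ('s \<times> 'a \<times> 's)) \<times> 't) R.
        normed_bsim tau A B b n R)"

end

theory Submission
  imports Defs
begin

lemma frag_snoc:
  "fin_exec_frag A s0 (xs @ [(a,s)]) \<longleftrightarrow>
     fin_exec_frag A s0 xs \<and> (last_state s0 xs, a, s) \<in> steps A"
proof -
  have lst: "(if length xs = 0 then s0 else snd (xs ! (length xs - 1))) = last_state s0 xs"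
    by (simp add: last_state_def last_conv_nth)
  have eq: "\<forall>i<length xs. ((if i = 0 then s0 else snd ((xs @ [(a, s)]) ! (i - 1)), fst ((xs @ [(a, s)]) ! i),
         snd ((xs @ [(a, s)]) ! i)) \<in> steps A) = ((if i = 0 then s0 else snd (xs ! (i - 1)), fst (xs ! i), snd (xs ! i)) \<in> steps A)"
    by (auto simp: nth_append)
  have eq2: "((if length xs = 0 then s0 else snd ((xs @ [(a, s)]) ! (length xs - 1)), fst ((xs @ [(a, s)]) ! length xs),
         snd ((xs @ [(a, s)]) ! length xs)) \<in> steps A) = ((last_state s0 xs, a, s) \<in> steps A)"
    using lst by (cases "xs = []") (simp_all add: nth_append)
  show ?thesis
    unfolding fin_exec_frag_def length_append_singleton All_less_Suc
    using eq eq2 by auto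
qed

lemma last_snoc[simp]: "last_state s0 (xs @ [(a,s)]) = s"
  by (simp add: last_state_def)

lemma trace_snoc: "fin_trace tau (xs @ [(a,s)]) = fin_trace tau xs @ (if a = tau then [] else [a])"
  by (simp add: fin_trace_def)

lemma exec_snoc:
  "fin_exec A s0 (xs @ [(a,s)]) \<longleftrightarrow> fin_exec A s0 xs \<and> (last_state s0 xs, a, s) \<in> steps A"
  by (simp add: fin_exec_def frag_snoc)

lemma last_in_states:
  assumes "is_automaton tau A" "fin_exec A s0 xs"
  shows "last_state s0 xs \<in> states A"
  using assms(2)
proof (induction xs rule: rev_induct)
  case Nil
  then show ?case using assms(1) by (auto simp: fin_exec_def fin_exec_frag_def last_state_def)
next
  case (snoc x xs)
  obtain a s where x: "x = (a,s)" by force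
  with snoc have "(last_state s0 xs, a, s) \<in> steps A" by (simp add: exec_snoc)
  with assms(1) x show ?case by (auto simp: is_automaton_def)
qed

lemma decomp:
  assumes "fin_exec B u0 ys" "last_state u0 ys = u"
  shows "(ys = [] \<and> u = u0 \<and> u \<in> start B) \<or>
    (\<exists>ys' c. ys = ys' @ [(c,u)] \<and> fin_exec B u0 ys' \<and> (last_state u0 ys', c, u) \<in> steps B)"
proof (cases ys rule: rev_cases)
  case Nil
  then show ?thesis using assms by (auto simp: last_state_def fin_exec_def)
next
  case (snoc ys' y)
  obtain c w where y: "y = (c,w)" by force
  with assms snoc have "w = u" by simp
  with assms snoc y show ?thesis by (auto simp: exec_snoc)
qed

definition Ex_of :: "('s, 'a) automaton \<Rightarrow> 's \<Rightarrow> 's \<times> ('a \<times> 's) list" where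
  "Ex_of A s = (THE e. fin_exec A (fst e) (snd e) \<and> last_state (fst e) (snd e) = s)"

definition Tr :: "'a \<Rightarrow> ('s, 'a) automaton \<Rightarrow> 's \<Rightarrow> 'a list" where
  "Tr tau A s = fin_trace tau (snd (Ex_of A s))"

lemma Tr_unique:
  assumes "is_automaton tau A" "is_forest A" "fin_exec A s0 xs" "last_state s0 xs = s"
  shows "Tr tau A s = fin_trace tau xs"
proof -
  have "s \<in> states A" using last_in_states[OF assms(1,3)] assms(4) by simp
  then have ex1: "\<exists>!e. fin_exec A (fst e) (snd e) \<and> last_state (fst e) (snd e) = s"
    using assms(2) unfolding is_forest_def by blast
  have "Ex_of A s = (s0, xs)"
    unfolding Ex_of_def
    by (rule the1_equality[OF ex1]) (simp only: fst_conv snd_conv assms(3,4) simp_thms)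
  then show ?thesis by (simp add: Tr_def)
qed

lemma Tr_exists:
  assumes "is_forest A" "s \<in> states A"
  shows "\<exists>s0 xs. fin_exec A s0 xs \<and> last_state s0 xs = s"
proof -
  have "\<exists>!e. fin_exec A (fst e) (snd e) \<and> last_state (fst e) (snd e) = s"
    using assms unfolding is_forest_def by blast
  then have "\<exists>e. fin_exec A (fst e) (snd e) \<and> last_state (fst e) (snd e) = s"
    by (rule ex1_implies_ex)
  then obtain e where "fin_exec A (fst e) (snd e)" "last_state (fst e) (snd e) = s" by blast
  then show ?thesis by blast
qed

lemma inf_to_fin:
  assumes "inf_exec B s0 f" "inf_has_fin_trace tau f tr"
  shows "\<exists>xs. fin_exec B s0 xs \<and> fin_trace tau xs = tr"
proof -
  let ?I = "{i. fst (f i) \<noteq> tau}"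
  have fin: "finite ?I" using assms(2) by (simp add: inf_has_fin_trace_def)
  define N where "N = Suc (Max ?I)"
  have N: "?I \<subseteq> {..<N}"
    using Max_ge[OF fin] unfolding N_def by (auto simp: le_imp_less_Suc)
  define xs where "xs = map f [0..<N]"
  have stp: "\<And>i. ((if i = 0 then s0 else snd (f (i - 1))), fst (f i), snd (f i)) \<in> steps B"
    and s0: "s0 \<in> start B" "s0 \<in> states B"
    using assms(1) by (auto simp: inf_exec_def inf_exec_frag_def)
  have "fin_exec B s0 xs"
    unfolding fin_exec_def fin_exec_frag_def
  proof (intro conjI allI impI)
    fix i assume i: "i < length xs"
    then have "i < N" by (simp add: xs_def)
    then show "(if i = 0 then s0 else snd (xs ! (i - 1)), fst (xs ! i), snd (xs ! i)) \<in> steps B"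
      using stp[of i] by (cases "i = 0") (simp_all add: xs_def)
  qed (use s0 in auto)
  have fl: "filter (\<lambda>i. fst (f i) \<noteq> tau) [0..<N] = sorted_list_of_set ?I"
    by (rule sorted_distinct_set_unique) (use fin N in \<open>auto intro: sorted_wrt_filter\<close>)
  have "fin_trace tau xs = map (\<lambda>i. fst (f i)) (filter (\<lambda>i. fst (f i) \<noteq> tau) [0..<N])"
    unfolding fin_trace_def xs_def map_map filter_map by (simp only: comp_def)
  also have "\<dots> = tr" using assms(2) fl unfolding inf_has_fin_trace_def by simp
  finally have "fin_trace tau xs = tr" .
  with \<open>fin_exec B s0 xs\<close> show ?thesis by blast
qed

definition good :: "'a \<Rightarrow> ('s, 'a) automaton \<Rightarrow> ('t, 'a) automaton \<Rightarrow> 's \<Rightarrow> 't \<Rightarrow> nat \<Rightarrow> bool" where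
  "good tau A B s u k \<longleftrightarrow> (\<exists>u0 ys. fin_exec B u0 ys \<and> last_state u0 ys = u \<and> length ys = k
      \<and> fin_trace tau ys = Tr tau A s)"

fun tgt :: "'s + ('s \<times> 'a \<times> 's) \<Rightarrow> 's" where
  "tgt (Inl s) = s"
| "tgt (Inr (t,a,s)) = s"

theorem mainTheorem6:
  fixes tau :: 'a and A :: "('s, 'a) automaton" and B :: "('t, 'a) automaton"
  assumes "is_automaton tau A" and "is_automaton tau B"
    and "is_forest A"
    and "fin_trace_incl tau A B"
  shows "bsim_le tau A B"
proof -
  note aA = assms(1) and aB = assms(2) and forest = assms(3)
  define b where "b = {(s,u). s \<in> states A \<and> (\<exists>k. good tau A B s u k)}"
  define fm :: "('s + ('s \<times> 'a \<times> 's)) \<times> 't \<Rightarrow> nat"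
    where "fm = (\<lambda>(x, u). LEAST k. good tau A B (tgt x) u k)"
  define R where "R = inv_image less_than (fm :: ('s + ('s \<times> 'a \<times> 's)) \<times> 't \<Rightarrow> nat)"
  have goodst: "u \<in> states B" if "good tau A B s u k" for s u k
    using that last_in_states[OF aB] by (auto simp: good_def)
  have bI: "u \<in> b `` {s}" if "s \<in> states A" "good tau A B s u k" for s u k
    using that by (auto simp: b_def)
  have key: "(u \<in> start B \<and> Tr tau A s = []) \<or>
      (\<exists>v c. (v, c, u) \<in> steps B \<and>
         ((c = tau \<and> good tau A B s v (k - 1) \<and> k > 0) \<or>
          (c \<noteq> tau \<and>
             (\<exists>tr. Tr tau A s = tr @ [c] \<and> (\<exists>u0 ys. fin_exec B u0 ys \<and> last_state u0 ys = v
                   \<and> fin_trace tau ys = tr)))))"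
    if "good tau A B s u k" for s u k
  proof -
    from that obtain u0 ys where ys: "fin_exec B u0 ys" "last_state u0 ys = u" "length ys = k"
      "fin_trace tau ys = Tr tau A s" by (auto simp: good_def)
    from decomp[OF ys(1,2)] show ?thesis
    proof
      assume h: "ys = [] \<and> u = u0 \<and> u \<in> start B"
      then have "Tr tau A s = []" using ys by (simp add: fin_trace_def)
      with h show ?thesis by blast
    next
      assume "\<exists>ys' c. ys = ys' @ [(c,u)] \<and> fin_exec B u0 ys' \<and> (last_state u0 ys', c, u) \<in> steps B"
      then obtain ys' c where d: "ys = ys' @ [(c,u)]" "fin_exec B u0 ys'" "(last_state u0 ys', c, u) \<in> steps B"
        by blast
      show ?thesis
      proof (cases "c = tau")
        case True
        then have "good tau A B s (last_state u0 ys') (k - 1)"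
          using d ys unfolding good_def by (intro exI[of _ u0] exI[of _ ys']) (auto simp: trace_snoc)
        moreover have "k > 0" using d ys by simp
        ultimately show ?thesis using d(3) True by blast
      next
        case False
        have "Tr tau A s = fin_trace tau ys' @ [c]" using d ys False by (simp add: trace_snoc)
        then show ?thesis using d(2,3) False by blast
      qed
    qed
  qed
  have lt: "((x, v), (x, u)) \<in> inv_image less_than fm"
    if "good tau A B (tgt x) v (k - 1)" "k > 0" "k = (LEAST k. good tau A B (tgt x) u k)" for x u v k
  proof -
    have "fm (x, v) \<le> k - 1" using that(1) unfolding fm_def by (simp add: Least_le)
    moreover have "fm (x, u) = k" using that(3) by (simp add: fm_def)
    ultimately show ?thesis using that(2) by simp
  qed
  have N: "normed_bsim tau A B b id R"
    unfolding normed_bsim_def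
  proof (intro conjI)
    show "wf R" unfolding R_def by simp
    show "trans R" unfolding R_def by (simp add: trans_inv_image)
    show "b \<subseteq> states A \<times> states B" using goodst by (auto simp: b_def)
    show "\<forall>s\<in>states A. b `` {s} \<noteq> {}"
    proof
      fix s assume s: "s \<in> states A"
      obtain s0 xs where e: "fin_exec A s0 xs" "last_state s0 xs = s"
        using Tr_exists[OF forest s] by blast
      have "fin_trace tau xs \<in> fin_traces tau A" using e by (auto simp: fin_traces_def)
      then have "fin_trace tau xs \<in> fin_traces tau B" using assms(4) by (auto simp: fin_trace_incl_def)
      then have "(\<exists>s0 ys. fin_exec B s0 ys \<and> fin_trace tau xs = fin_trace tau ys) \<or>
          (\<exists>s0 f. inf_exec B s0 f \<and> inf_has_fin_trace tau f (fin_trace tau xs))"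
        by (simp add: fin_traces_def)
      then obtain u0 ys where "fin_exec B u0 ys" "fin_trace tau ys = fin_trace tau xs"
      proof (elim disjE exE conjE)
        fix s0 f assume "inf_exec B s0 f" "inf_has_fin_trace tau f (fin_trace tau xs)"
        from inf_to_fin[OF this] obtain ys where "fin_exec B s0 ys" "fin_trace tau ys = fin_trace tau xs"
          by blast
        then show thesis using that by blast
      qed (use that in auto)
      then have "good tau A B s (last_state u0 ys) (length ys)"
        using Tr_unique[OF aA forest e] unfolding good_def by auto
      then show "b `` {s} \<noteq> {}" using bI[OF s] by blast
    qed
    show "\<forall>s\<in>start A. \<forall>u\<in>b `` {s}. u \<in> start B \<or>
        (\<exists>v\<in>b `` {s}. (v, tau, u) \<in> steps B \<and> (id (Inl s, v), id (Inl s, u)) \<in> R)"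
    proof (intro ballI)
      fix s u assume s: "s \<in> start A" and u: "u \<in> b `` {s}"
      have sA: "s \<in> states A" using s aA by (auto simp: is_automaton_def)
      have e: "fin_exec A s []" using s sA by (simp add: fin_exec_def fin_exec_frag_def)
      have T: "Tr tau A s = []" using Tr_unique[OF aA forest e] by (simp add: last_state_def fin_trace_def)
      define k where "k = (LEAST k. good tau A B s u k)"
      have g: "good tau A B s u k" unfolding k_def by (rule LeastI_ex) (use u in \<open>simp add: b_def\<close>)
      from key[OF g] T show "u \<in> start B \<or>
        (\<exists>v\<in>b `` {s}. (v, tau, u) \<in> steps B \<and> (id (Inl s, v), id (Inl s, u)) \<in> R)"
      proof (elim disjE exE conjE)
        fix v c assume st: "(v, c, u) \<in> steps B" and "c = tau" "good tau A B s v (k - 1)" "0 < k"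
        then have "((Inl s, v), (Inl s, u)) \<in> inv_image less_than fm"
          using lt[of "Inl s" v k u] k_def by simp
        then show ?thesis using st \<open>c = tau\<close> bI[OF sA \<open>good tau A B s v (k - 1)\<close>]
          unfolding R_def by auto
      qed auto
    qed
    show "\<forall>t a s. (t, a, s) \<in> steps A \<longrightarrow> (\<forall>u\<in>b `` {s}.
        (u \<in> b `` {t} \<and> a = tau) \<or> (\<exists>v\<in>b `` {t}. (v, a, u) \<in> steps B) \<or>
        (\<exists>v\<in>b `` {s}. (v, tau, u) \<in> steps B \<and> (id (Inr (t, a, s), v), id (Inr (t, a, s), u)) \<in> R))"
    proof (intro allI impI ballI)
      fix t a s u assume st: "(t, a, s) \<in> steps A" and u: "u \<in> b `` {s}"
      have tA: "t \<in> states A" and sA: "s \<in> states A" using st aA by (auto simp: is_automaton_def)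
      obtain s0 xs where e: "fin_exec A s0 xs" "last_state s0 xs = t"
        using Tr_exists[OF forest tA] by blast
      have e2: "fin_exec A s0 (xs @ [(a,s)])" using e st by (simp add: exec_snoc)
      have Tt: "Tr tau A t = fin_trace tau xs" using Tr_unique[OF aA forest e] .
      have Ts: "Tr tau A s = Tr tau A t @ (if a = tau then [] else [a])"
        using Tr_unique[OF aA forest e2] Tt by (simp add: trace_snoc)
      define k where "k = (LEAST k. good tau A B s u k)"
      have g: "good tau A B s u k" unfolding k_def by (rule LeastI_ex) (use u in \<open>simp add: b_def\<close>)
      have gt: "good tau A B t u k" if "a = tau" using g that Ts unfolding good_def by simp
      from key[OF g] show "(u \<in> b `` {t} \<and> a = tau) \<or> (\<exists>v\<in>b `` {t}. (v, a, u) \<in> steps B) \<or>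
        (\<exists>v\<in>b `` {s}. (v, tau, u) \<in> steps B \<and> (id (Inr (t, a, s), v), id (Inr (t, a, s), u)) \<in> R)"
      proof (elim disjE exE conjE)
        assume "u \<in> start B" "Tr tau A s = []"
        then have "a = tau" using Ts by (auto split: if_splits)
        then show ?thesis using gt bI[OF tA] by blast
      next
        fix v c assume stB: "(v, c, u) \<in> steps B" and "c = tau" "good tau A B s v (k - 1)" "0 < k"
        then have "((Inr (t,a,s), v), (Inr (t,a,s), u)) \<in> inv_image less_than fm"
          using lt[of "Inr (t,a,s)" v k u] k_def by simp
        then show ?thesis using stB \<open>c = tau\<close> bI[OF sA \<open>good tau A B s v (k - 1)\<close>]
          unfolding R_def by auto
      next
        fix v c tr u0 ys assume stB: "(v, c, u) \<in> steps B" and c: "c \<noteq> tau"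
          and tr: "Tr tau A s = tr @ [c]" and ys: "fin_exec B u0 ys" "last_state u0 ys = v"
          "fin_trace tau ys = tr"
        show ?thesis
        proof (cases "a = tau")
          case True
          then show ?thesis using gt bI[OF tA] by blast
        next
          case False
          then have "a = c" "Tr tau A t = tr" using Ts tr by auto
          then have "good tau A B t v (length ys)" using ys unfolding good_def by auto
          then show ?thesis using bI[OF tA] stB \<open>a = c\<close> by blast
        qed
      qed
    qed
  qed
  show ?thesis unfolding bsim_le_def
    apply (rule exI[of _ b])
    apply (rule exI[of _ id])
    apply (rule exI[of _ R])
    by (rule N)
qed

end
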